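(* Let $(X_1,X_2)$ be a nonnegative random vector and let $\overline F_T$ be a DFR survival function on $[0,\infty)$. Assume there exists an $N_1$-distributional version $\{Z_2^{x_1}:x_1\in N_1\}$ of $X_2$ given $X_1$ such that $Z_2^{x_1}\le_{ST}X_1$ for all $x_1\in N_1$. Then $$\big(E[\overline F_T(X_1)]\big)^2\le E[\overline F_T(X_1+X_2)]\,\overline F_T(0).$$
   Context: A survival function $\overline G$ is DFR if for every $z\ge0$ the map $t\mapsto\overline G(z+t)/\overline G(t)$ is increasing (on $\{t:\overline G(t)>0\}$). For random variables $X,Y$, $X\le_{ST}Y$ means $P(X>t)\le P(Y>t)$ for all real $t$. Let $F_1$ be the law of $X_1$ and $N_1\subseteq\mathbb R_+$ a Borel set with $P(X_1\in N_1)=1$. A family $\{\mu^{x}:x\in N_1\}$ of probability measures on $\mathbb R_+$ with $x\mapsto\mu^{x}(B)$ measurable for every Borel $B$ is an $N_1$ regular conditional distribution of $X_2$ given $X_1$ if $P(X_1\in A,X_2\in B)=\int_A\mu^{x}(B)\,dF_1(x)$ for all Borel $A\subseteq N_1$, $B\subseteq\mathbb R_+$; an $N_1$-distributional version of $X_2$ given $X_1$ is a family of random variables $\{Z_2^{x}:x\in N_1\}$ with $Z_2^{x}$ having law $\mu^{x}$ for such a regular conditional distribution. *)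

theory Defs
  imports "HOL-Probability.Probability"
begin

definition survival_fun_nonneg :: "(real \<Rightarrow> real) \<Rightarrow> bool" where
  "survival_fun_nonneg G \<longleftrightarrow>
     (\<exists>\<nu>::real measure. prob_space \<nu> \<and> sets \<nu> = sets borel \<and>
        (\<forall>t\<ge>0. G t = measure \<nu> {t<..}))"

definition DFR :: "(real \<Rightarrow> real) \<Rightarrow> bool" where
  "DFR G \<longleftrightarrow>
     (\<forall>z\<ge>0. \<forall>s t. 0 \<le> s \<longrightarrow> s \<le> t \<longrightarrow> G s > 0 \<longrightarrow> G t > 0 \<longrightarrow>
        G (z + s) / G s \<le> G (z + t) / G t)"

definition regular_cond_distr ::
    "'a measure \<Rightarrow> ('a \<Rightarrow> real) \<Rightarrow> ('a \<Rightarrow> real) \<Rightarrow> real set \<Rightarrow> (real \<Rightarrow> real measure) \<Rightarrow> bool" where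
  "regular_cond_distr M X1 X2 N1 \<mu> \<longleftrightarrow>
     N1 \<in> sets borel \<and> N1 \<subseteq> {0..} \<and>
     measure M {\<omega> \<in> space M. X1 \<omega> \<in> N1} = 1 \<and>
     (\<forall>x\<in>N1. prob_space (\<mu> x) \<and> sets (\<mu> x) = sets borel \<and> measure (\<mu> x) {0..} = 1) \<and>
     (\<forall>B\<in>sets borel. (\<lambda>x. measure (\<mu> x) B) \<in> borel_measurable (restrict_space borel N1)) \<and>
     (\<forall>A\<in>sets borel. \<forall>B\<in>sets borel. A \<subseteq> N1 \<longrightarrow> B \<subseteq> {0..} \<longrightarrow>
        measure M {\<omega> \<in> space M. X1 \<omega> \<in> A \<and> X2 \<omega> \<in> B} =
        (LINT x:A | distr M borel X1. measure (\<mu> x) B))"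

text \<open>Usual stochastic order Z \<le>_ST X between a random variable Z with law \<nu>
  and a random variable X on M: P(Z > t) \<le> P(X > t) for all real t.
  (This only depends on the law \<nu> of Z.)\<close>
definition st_le_law :: "real measure \<Rightarrow> 'a measure \<Rightarrow> ('a \<Rightarrow> real) \<Rightarrow> bool" where
  "st_le_law \<nu> M X \<longleftrightarrow> (\<forall>t::real. measure \<nu> {t<..} \<le> measure M {\<omega> \<in> space M. X \<omega> > t})"

end

theory Submission
  imports Defs
begin

lemma mu_bound:
  assumes PM: "prob_space M" and X1: "X1 \<in> borel_measurable M"
    and PV: "prob_space V" and SV: "sets V = sets borel" and V0: "measure V {0..} = 1"
    and st: "st_le_law V M X1"
  shows "measure M {\<omega>\<in>space M. X1 \<omega> < t} \<le> measure V {0..<t}"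
proof -
  interpret M: prob_space M by fact
  interpret V: prob_space V by fact
  have evV: "S \<in> sets borel \<Longrightarrow> S \<in> sets V" for S using SV by simp
  define A where "A n = {\<omega>\<in>space M. t - 1 / real (Suc n) < X1 \<omega>}" for n
  have Ameas: "range A \<subseteq> sets M" unfolding A_def using X1 by auto
  have dec: "decseq A"
  proof (rule decseq_SucI)
    fix n
    have "1 / real (Suc (Suc n)) \<le> 1 / real (Suc n)" by (simp add: frac_le)
    then show "A (Suc n) \<subseteq> A n" unfolding A_def by auto
  qed
  have inter: "(\<Inter>n. A n) = {\<omega>\<in>space M. t \<le> X1 \<omega>}"
  proof (intro set_eqI iffI)
    fix \<omega> assume "\<omega> \<in> (\<Inter>n. A n)"
    hence sp: "\<omega> \<in> space M" and h: "\<And>n. t - 1 / real (Suc n) < X1 \<omega>" unfolding A_def by auto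
    have "t \<le> X1 \<omega>"
    proof (rule ccontr)
      assume "\<not> t \<le> X1 \<omega>"
      then obtain n where "1 / real (Suc n) < t - X1 \<omega>"
        using reals_Archimedean[of "t - X1 \<omega>"] by (auto simp: field_simps)
      with h[of n] show False by linarith
    qed
    with sp show "\<omega> \<in> {\<omega>\<in>space M. t \<le> X1 \<omega>}" by simp
  next
    fix \<omega> assume "\<omega> \<in> {\<omega>\<in>space M. t \<le> X1 \<omega>}"
    moreover have "\<And>n. 0 < 1 / real (Suc n)" by simp
    ultimately show "\<omega> \<in> (\<Inter>n. A n)" unfolding A_def by (auto simp del: of_nat_Suc) (smt (verit) of_nat_0_less_iff zero_less_Suc divide_pos_pos)
  qed
  have lim: "(\<lambda>n. measure M (A n)) \<longlonglongrightarrow> measure M {\<omega>\<in>space M. t \<le> X1 \<omega>}"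
    using M.finite_Lim_measure_decseq[OF Ameas dec] inter by simp
  have bnd: "measure V {t..} \<le> measure M (A n)" for n
  proof -
    have p: "0 < 1 / real (Suc n)" by simp
    have sub: "{t..} \<subseteq> {t - 1 / real (Suc n)<..}"
    proof
      fix x :: real assume "x \<in> {t..}"
      hence "t \<le> x" by simp
      with p have "t - 1 / real (Suc n) < x" by linarith
      thus "x \<in> {t - 1 / real (Suc n)<..}" by simp
    qed
    have "measure V {t..} \<le> measure V {t - 1 / real (Suc n)<..}"
      by (rule V.finite_measure_mono[OF sub]) (auto intro: evV)
    also have "\<dots> \<le> measure M (A n)" using st unfolding st_le_law_def A_def by simp
    finally show ?thesis .
  qed
  have 1: "measure V {t..} \<le> measure M {\<omega>\<in>space M. t \<le> X1 \<omega>}"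
    by (rule LIMSEQ_le_const[OF lim]) (use bnd in auto)
  have "1 = measure V {0..}" using V0 by simp
  also have "\<dots> \<le> measure V ({0..<t} \<union> {t..})"
    by (rule V.finite_measure_mono) (auto intro: evV)
  also have "\<dots> \<le> measure V {0..<t} + measure V {t..}"
    by (rule measure_subadditive) (auto intro: evV)
  finally have 2: "1 \<le> measure V {0..<t} + measure V {t..}" .
  have "measure M {\<omega>\<in>space M. X1 \<omega> < t} = measure M (space M - {\<omega>\<in>space M. t \<le> X1 \<omega>})"
    by (rule arg_cong[where f="measure M"]) auto
  also have "\<dots> = 1 - measure M {\<omega>\<in>space M. t \<le> X1 \<omega>}"
    by (rule M.prob_compl) (use X1 in measurable)
  finally show ?thesis using 1 2 by linarith
qed

lemma rect:
  assumes PM: "prob_space M" and X1: "X1 \<in> borel_measurable M" and X2: "X2 \<in> borel_measurable M"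
    and rcd: "regular_cond_distr M X1 X2 N1 \<mu>" and st: "\<forall>x\<in>N1. st_le_law (\<mu> x) M X1"
  shows "measure M {\<omega>\<in>space M. X1 \<omega> < s} * measure M {\<omega>\<in>space M. X1 \<omega> < t}
     \<le> measure M {\<omega>\<in>space M. X1 \<omega> < s \<and> X2 \<omega> < t}"
proof -
  interpret M: prob_space M by fact
  have N1: "N1 \<in> sets borel" and N1sub: "N1 \<subseteq> {0..}"
    and mN1: "measure M {\<omega> \<in> space M. X1 \<omega> \<in> N1} = 1"
    and pmu: "\<And>x. x\<in>N1 \<Longrightarrow> prob_space (\<mu> x) \<and> sets (\<mu> x) = sets borel \<and> measure (\<mu> x) {0..} = 1"
    and meas: "\<And>B. B\<in>sets borel \<Longrightarrow> (\<lambda>x. measure (\<mu> x) B) \<in> borel_measurable (restrict_space borel N1)"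
    and eq: "\<And>A B. A\<in>sets borel \<Longrightarrow> B\<in>sets borel \<Longrightarrow> A \<subseteq> N1 \<Longrightarrow> B \<subseteq> {0..} \<Longrightarrow>
        measure M {\<omega> \<in> space M. X1 \<omega> \<in> A \<and> X2 \<omega> \<in> B} =
        (LINT x:A | distr M borel X1. measure (\<mu> x) B)"
    using rcd unfolding regular_cond_distr_def by auto
  define A where "A = {0..<s} \<inter> N1"
  define B where "B = {0..<t::real}"
  define F1 where "F1 = distr M borel X1"
  define f where "f x = measure (\<mu> x) B" for x
  define c where "c = measure M {\<omega>\<in>space M. X1 \<omega> < t}"
  have Ab: "A \<in> sets borel" unfolding A_def using N1 by auto
  have Bb: "B \<in> sets borel" unfolding B_def by auto
  have AN: "A \<subseteq> N1" unfolding A_def by auto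
  interpret F: prob_space F1 unfolding F1_def by (rule M.prob_space_distr[OF X1])
  have sF: "sets F1 = sets borel" unfolding F1_def by simp
  have fA: "c \<le> f x" if "x \<in> N1" for x
    unfolding c_def f_def B_def
    using mu_bound[OF PM X1, of "\<mu> x"] pmu[OF that] st that by auto
  have f01: "0 \<le> f x \<and> f x \<le> 1" if "x \<in> N1" for x
  proof -
    interpret P: prob_space "\<mu> x" using pmu[OF that] by simp
    show ?thesis unfolding f_def by simp
  qed
  have c0: "0 \<le> c" unfolding c_def by simp
  have fm1: "(\<lambda>x. indicator N1 x *\<^sub>R f x) \<in> borel_measurable borel"
    using meas[OF Bb] borel_measurable_restrict_space_iff[of N1 borel f] N1 unfolding f_def by simp
  have fm2: "(\<lambda>x. indicator A x * f x) \<in> borel_measurable borel"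
  proof -
    have "(\<lambda>x. indicator A x * (indicator N1 x *\<^sub>R f x)) \<in> borel_measurable borel"
      using fm1 Ab by measurable
    moreover have "(\<lambda>x. indicator A x * (indicator N1 x *\<^sub>R f x)) = (\<lambda>x. indicator A x * f x)"
      using AN by (auto simp: indicator_def fun_eq_iff)
    ultimately show ?thesis by simp
  qed
  have fm3: "(\<lambda>x. indicator A x * f x) \<in> borel_measurable F1"
    by (subst measurable_cong_sets[OF sF refl]) (rule fm2)
  have int1: "integrable F1 (\<lambda>x. indicator A x * f x)"
  proof (rule F.integrable_const_bound[where B=1])
    show "AE x in F1. norm (indicator A x * f x) \<le> (1::real)"
    proof (rule AE_I2)
      fix x show "norm (indicator A x * f x) \<le> (1::real)"
        using f01[of x] AN by (cases "x \<in> A") auto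
    qed
  qed (rule fm3)
  have int2: "integrable F1 (\<lambda>x. indicator A x * c)"
  proof (rule F.integrable_const_bound[where B=c])
    show "AE x in F1. norm (indicator A x * c) \<le> c"
    proof (rule AE_I2)
      fix x show "norm (indicator A x * c) \<le> c"
        using c0 by (cases "x \<in> A") auto
    qed
    show "(\<lambda>x. indicator A x * c) \<in> borel_measurable F1"
      by (subst measurable_cong_sets[OF sF refl]) (use Ab in measurable)
  qed
  have mA: "measure F1 A = measure M (X1 -` A \<inter> space M)"
    unfolding F1_def using Ab X1 by (simp add: measure_distr)
  have S1: "X1 -` A \<inter> space M \<in> sets M" using measurable_sets[OF X1 Ab] .
  have S2: "X1 -` N1 \<inter> space M \<in> sets M" using measurable_sets[OF X1 N1] .
  have S2eq: "{\<omega> \<in> space M. X1 \<omega> \<in> N1} = X1 -` N1 \<inter> space M" by auto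
  have S3: "space M - {\<omega> \<in> space M. X1 \<omega> \<in> N1} \<in> sets M" unfolding S2eq using S2 by auto
  have "measure M {\<omega>\<in>space M. X1 \<omega> < s}
      \<le> measure M ((X1 -` A \<inter> space M) \<union> (space M - {\<omega> \<in> space M. X1 \<omega> \<in> N1}))"
  proof (rule M.finite_measure_mono)
    show "{\<omega>\<in>space M. X1 \<omega> < s} \<subseteq> (X1 -` A \<inter> space M) \<union> (space M - {\<omega> \<in> space M. X1 \<omega> \<in> N1})"
      using N1sub unfolding A_def by auto
    show "(X1 -` A \<inter> space M) \<union> (space M - {\<omega> \<in> space M. X1 \<omega> \<in> N1}) \<in> sets M"
      using S1 S3 by auto
  qed
  also have "\<dots> \<le> measure M (X1 -` A \<inter> space M) + measure M (space M - {\<omega> \<in> space M. X1 \<omega> \<in> N1})"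
    by (rule measure_subadditive) (use S1 S3 in auto)
  also have "measure M (space M - {\<omega> \<in> space M. X1 \<omega> \<in> N1}) = 0"
    using M.prob_compl[OF S2] mN1 unfolding S2eq by simp
  finally have ps: "measure M {\<omega>\<in>space M. X1 \<omega> < s} \<le> measure F1 A" using mA by simp
  have "measure M {\<omega>\<in>space M. X1 \<omega> < s} * c \<le> measure F1 A * c"
    using ps c0 by (rule mult_right_mono)
  also have "\<dots> = integral\<^sup>L F1 (\<lambda>x. indicator A x * c)"
    using Ab sF by simp
  also have "\<dots> \<le> integral\<^sup>L F1 (\<lambda>x. indicator A x * f x)"
    by (rule integral_mono[OF int2 int1]) (use fA AN in \<open>auto simp: indicator_def\<close>)
  also have "\<dots> = (LINT x:A | distr M borel X1. measure (\<mu> x) B)"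
    unfolding set_lebesgue_integral_def F1_def f_def by simp
  also have "\<dots> = measure M {\<omega> \<in> space M. X1 \<omega> \<in> A \<and> X2 \<omega> \<in> B}"
    using eq[OF Ab Bb AN] unfolding B_def by force
  also have "\<dots> \<le> measure M {\<omega>\<in>space M. X1 \<omega> < s \<and> X2 \<omega> < t}"
  proof (rule M.finite_measure_mono)
    show "{\<omega> \<in> space M. X1 \<omega> \<in> A \<and> X2 \<omega> \<in> B} \<subseteq> {\<omega>\<in>space M. X1 \<omega> < s \<and> X2 \<omega> < t}"
      by (auto simp: A_def B_def)
    show "{\<omega>\<in>space M. X1 \<omega> < s \<and> X2 \<omega> < t} \<in> sets M"
      using X1 X2 by measurable
  qed
  finally show ?thesis unfolding c_def .
qed

theorem proposition3p2:
  fixes M :: "'a measure" and X1 X2 :: "'a \<Rightarrow> real" and G :: "real \<Rightarrow> real"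
  assumes "prob_space M"
    and "X1 \<in> borel_measurable M" and "X2 \<in> borel_measurable M"
    and "\<forall>\<omega>\<in>space M. X1 \<omega> \<ge> 0 \<and> X2 \<omega> \<ge> 0"
    and "survival_fun_nonneg G" and "DFR G"
    and "\<exists>N1 \<mu>. regular_cond_distr M X1 X2 N1 \<mu> \<and> (\<forall>x\<in>N1. st_le_law (\<mu> x) M X1)"
  shows "(\<integral>\<omega>. G (X1 \<omega>) \<partial>M)\<^sup>2 \<le> (\<integral>\<omega>. G (X1 \<omega> + X2 \<omega>) \<partial>M) * G 0"
proof -
  note PM = assms(1) and X1[measurable] = assms(2) and X2[measurable] = assms(3)
    and nn = assms(4) and dfr = assms(6)
  interpret M: prob_space M by fact
  obtain V :: "real measure" where PV: "prob_space V" and SV[measurable_cong]: "sets V = sets borel"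
    and GV: "\<And>t. t \<ge> 0 \<Longrightarrow> G t = measure V {t<..}"
    using assms(5) unfolding survival_fun_nonneg_def by blast
  obtain N1 \<mu> where rcd: "regular_cond_distr M X1 X2 N1 \<mu>" and st: "\<forall>x\<in>N1. st_le_law (\<mu> x) M X1"
    using assms(7) by blast
  interpret V: prob_space V by fact
  interpret MV: pair_sigma_finite M V by unfold_locales
  define g where "g x = measure V {x<..}" for x
  have gsets: "{x<..} \<in> sets V" for x using SV by simp
  have g01: "0 \<le> g x \<and> g x \<le> 1" for x unfolding g_def by simp
  have gmono: "x \<le> y \<Longrightarrow> g y \<le> g x" for x y
    unfolding g_def by (rule V.finite_measure_mono) (auto simp: gsets)
  have gmeas[measurable]: "g \<in> borel_measurable borel"
  proof -
    have "mono (\<lambda>x. - g x)" by (auto simp: mono_def intro: gmono)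
    hence "(\<lambda>x. - (- g x)) \<in> borel_measurable borel"
      by (intro borel_measurable_uminus borel_measurable_mono)
    thus ?thesis by simp
  qed
  have Gg: "x \<ge> 0 \<Longrightarrow> G x = g x" for x using GV unfolding g_def by simp
  have pw: "g x * g y \<le> g (x + y) * g 0" if "x \<ge> 0" "y \<ge> 0" for x y
  proof (cases "g y = 0")
    case True thus ?thesis using g01[of "x+y"] g01[of 0] by simp
  next
    case False
    hence gy: "g y > 0" using g01[of y] by simp
    hence g0: "g 0 > 0" using gmono[of 0 y] that by simp
    have "G (x + 0) / G 0 \<le> G (x + y) / G y"
    proof -
      have "\<forall>s t. 0 \<le> s \<longrightarrow> s \<le> t \<longrightarrow> G s > 0 \<longrightarrow> G t > 0 \<longrightarrow> G (x + s) / G s \<le> G (x + t) / G t"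
        using dfr that unfolding DFR_def by blast
      hence "0 \<le> (0::real) \<longrightarrow> 0 \<le> y \<longrightarrow> G 0 > 0 \<longrightarrow> G y > 0 \<longrightarrow> G (x + 0) / G 0 \<le> G (x + y) / G y"
        by blast
      thus ?thesis using that gy g0 Gg[of 0] Gg[of y] by simp
    qed
    hence "g x / g 0 \<le> g (x + y) / g y" using Gg that by simp
    thus ?thesis using gy g0 by (simp add: field_simps)
  qed
  have intg: "integrable M (\<lambda>\<omega>. g (f \<omega>))" if [measurable]: "f \<in> borel_measurable M" for f
    by (rule M.integrable_const_bound[where B=1]) (use g01 in auto)
  have intgg: "integrable M (\<lambda>\<omega>. g (X1 \<omega>) * g (X2 \<omega>))"
    by (rule M.integrable_const_bound[where B=1]) (use g01 in \<open>auto intro: mult_le_one\<close>)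
  have a_eq: "(\<integral>\<omega>. G (X1 \<omega>) \<partial>M) = (\<integral>\<omega>. g (X1 \<omega>) \<partial>M)"
    by (rule Bochner_Integration.integral_cong) (use nn Gg in auto)
  have b_eq: "(\<integral>\<omega>. G (X1 \<omega> + X2 \<omega>) \<partial>M) = (\<integral>\<omega>. g (X1 \<omega> + X2 \<omega>) \<partial>M)"
    by (rule Bochner_Integration.integral_cong) (use nn Gg in auto)
  have step1: "(\<integral>\<omega>. g (X1 \<omega>) * g (X2 \<omega>) \<partial>M) \<le> (\<integral>\<omega>. g (X1 \<omega> + X2 \<omega>) \<partial>M) * g 0"
  proof -
    have "(\<integral>\<omega>. g (X1 \<omega>) * g (X2 \<omega>) \<partial>M) \<le> (\<integral>\<omega>. g (X1 \<omega> + X2 \<omega>) * g 0 \<partial>M)"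
      by (rule integral_mono[OF intgg]) (use intg[of "\<lambda>\<omega>. X1 \<omega> + X2 \<omega>"] pw nn in auto)
    thus ?thesis by simp
  qed
  define I1 where "I1 \<omega> s = (if X1 \<omega> < s then 1 else 0 :: ennreal)" for \<omega> s
  define I2 where "I2 \<omega> t = (if X2 \<omega> < t then 1 else 0 :: ennreal)" for \<omega> t
  have mI1[measurable]: "case_prod I1 \<in> borel_measurable (M \<Otimes>\<^sub>M V)"
    unfolding I1_def by measurable
  have mI1'[measurable]: "(\<lambda>(s, \<omega>). I1 \<omega> s) \<in> borel_measurable (V \<Otimes>\<^sub>M M)"
    unfolding I1_def by measurable
  have mI12: "(\<lambda>(\<omega>, t). I1 \<omega> s * I2 \<omega> t) \<in> borel_measurable (M \<Otimes>\<^sub>M V)" for s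
    unfolding I1_def I2_def by measurable
  have mI123: "(\<lambda>(\<omega>, s). \<integral>\<^sup>+ t. I1 \<omega> s * I2 \<omega> t \<partial>V) \<in> borel_measurable (M \<Otimes>\<^sub>M V)"
    unfolding I1_def I2_def by measurable
  have mP: "(\<lambda>s. \<integral>\<^sup>+ \<omega>. I1 \<omega> s \<partial>M) \<in> borel_measurable V"
    by measurable
  have H1: "(\<integral>\<^sup>+ s. I1 \<omega> s \<partial>V) = ennreal (g (X1 \<omega>))" for \<omega>
  proof -
    have "(\<lambda>s. I1 \<omega> s) = indicator {X1 \<omega><..}" unfolding I1_def by (auto simp: indicator_def fun_eq_iff)
    thus ?thesis using nn_integral_indicator[OF gsets] V.emeasure_eq_measure g_def by simp
  qed
  have H2: "(\<integral>\<^sup>+ s. I2 \<omega> s \<partial>V) = ennreal (g (X2 \<omega>))" for \<omega>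
  proof -
    have "(\<lambda>s. I2 \<omega> s) = indicator {X2 \<omega><..}" unfolding I2_def by (auto simp: indicator_def fun_eq_iff)
    thus ?thesis using nn_integral_indicator[OF gsets] V.emeasure_eq_measure g_def by simp
  qed
  have PQ: "(\<integral>\<^sup>+ \<omega>. I1 \<omega> s \<partial>M) * (\<integral>\<^sup>+ \<omega>. I1 \<omega> t \<partial>M) \<le> (\<integral>\<^sup>+ \<omega>. I1 \<omega> s * I2 \<omega> t \<partial>M)" for s t
  proof -
    have e1: "(\<integral>\<^sup>+ \<omega>. I1 \<omega> u \<partial>M) = ennreal (measure M {\<omega>\<in>space M. X1 \<omega> < u})" for u
    proof -
      have "(\<integral>\<^sup>+ \<omega>. I1 \<omega> u \<partial>M) = (\<integral>\<^sup>+ \<omega>. indicator {\<omega>\<in>space M. X1 \<omega> < u} \<omega> \<partial>M)"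
        by (rule nn_integral_cong) (auto simp: I1_def indicator_def)
      also have "\<dots> = emeasure M {\<omega>\<in>space M. X1 \<omega> < u}"
        by (rule nn_integral_indicator) measurable
      finally show ?thesis using M.emeasure_eq_measure by simp
    qed
    have e2: "(\<integral>\<^sup>+ \<omega>. I1 \<omega> s * I2 \<omega> t \<partial>M) = ennreal (measure M {\<omega>\<in>space M. X1 \<omega> < s \<and> X2 \<omega> < t})"
    proof -
      have "(\<integral>\<^sup>+ \<omega>. I1 \<omega> s * I2 \<omega> t \<partial>M) = (\<integral>\<^sup>+ \<omega>. indicator {\<omega>\<in>space M. X1 \<omega> < s \<and> X2 \<omega> < t} \<omega> \<partial>M)"
        by (rule nn_integral_cong) (auto simp: I1_def I2_def indicator_def)
      also have "\<dots> = emeasure M {\<omega>\<in>space M. X1 \<omega> < s \<and> X2 \<omega> < t}"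
        by (rule nn_integral_indicator) measurable
      finally show ?thesis using M.emeasure_eq_measure by simp
    qed
    show ?thesis unfolding e1 e2
      using rect[OF PM X1 X2 rcd st, of s t]
      by (simp add: ennreal_mult''[symmetric] ennreal_leI)
  qed
  have mI2: "(\<lambda>t. I2 \<omega> t) \<in> borel_measurable V" for \<omega> unfolding I2_def by measurable
  have mI1s: "(\<lambda>t. I1 \<omega> t) \<in> borel_measurable V" for \<omega> unfolding I1_def by measurable
  define E where "E = (\<integral>\<^sup>+ s. (\<integral>\<^sup>+ \<omega>. I1 \<omega> s \<partial>M) \<partial>V)"
  have aE: "ennreal (\<integral>\<omega>. g (X1 \<omega>) \<partial>M) = E"
  proof -
    have "ennreal (\<integral>\<omega>. g (X1 \<omega>) \<partial>M) = (\<integral>\<^sup>+ \<omega>. ennreal (g (X1 \<omega>)) \<partial>M)"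
      by (rule nn_integral_eq_integral[symmetric]) (use intg[OF X1] g01 in auto)
    also have "\<dots> = (\<integral>\<^sup>+ \<omega>. (\<integral>\<^sup>+ s. I1 \<omega> s \<partial>V) \<partial>M)" using H1 by simp
    also have "\<dots> = E" unfolding E_def by (rule MV.Fubini'[OF mI1, symmetric])
    finally show ?thesis .
  qed
  have cE: "ennreal (\<integral>\<omega>. g (X1 \<omega>) * g (X2 \<omega>) \<partial>M) = (\<integral>\<^sup>+ \<omega>. (\<integral>\<^sup>+ s. (\<integral>\<^sup>+ t. I1 \<omega> s * I2 \<omega> t \<partial>V) \<partial>V) \<partial>M)"
  proof -
    have "ennreal (\<integral>\<omega>. g (X1 \<omega>) * g (X2 \<omega>) \<partial>M) = (\<integral>\<^sup>+ \<omega>. ennreal (g (X1 \<omega>) * g (X2 \<omega>)) \<partial>M)"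
      by (rule nn_integral_eq_integral[symmetric]) (use intgg g01 in auto)
    also have "\<dots> = (\<integral>\<^sup>+ \<omega>. (\<integral>\<^sup>+ s. (\<integral>\<^sup>+ t. I1 \<omega> s * I2 \<omega> t \<partial>V) \<partial>V) \<partial>M)"
    proof (rule nn_integral_cong)
      fix \<omega>
      have "(\<integral>\<^sup>+ s. (\<integral>\<^sup>+ t. I1 \<omega> s * I2 \<omega> t \<partial>V) \<partial>V) = (\<integral>\<^sup>+ s. I1 \<omega> s * (\<integral>\<^sup>+ t. I2 \<omega> t \<partial>V) \<partial>V)"
        by (rule nn_integral_cong) (rule nn_integral_cmult[OF mI2])
      also have "\<dots> = (\<integral>\<^sup>+ s. I1 \<omega> s \<partial>V) * (\<integral>\<^sup>+ t. I2 \<omega> t \<partial>V)"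
        by (rule nn_integral_multc[OF mI1s])
      also have "\<dots> = ennreal (g (X1 \<omega>) * g (X2 \<omega>))"
        using H1 H2 g01 by (simp add: ennreal_mult'')
      finally show "ennreal (g (X1 \<omega>) * g (X2 \<omega>)) = (\<integral>\<^sup>+ s. (\<integral>\<^sup>+ t. I1 \<omega> s * I2 \<omega> t \<partial>V) \<partial>V)" by simp
    qed
    finally show ?thesis .
  qed
  have "E * E = (\<integral>\<^sup>+ s. (\<integral>\<^sup>+ \<omega>. I1 \<omega> s \<partial>M) * E \<partial>V)"
    unfolding E_def by (rule nn_integral_multc[OF mP, symmetric])
  also have "\<dots> = (\<integral>\<^sup>+ s. (\<integral>\<^sup>+ t. (\<integral>\<^sup>+ \<omega>. I1 \<omega> s \<partial>M) * (\<integral>\<^sup>+ \<omega>. I1 \<omega> t \<partial>M) \<partial>V) \<partial>V)"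
    unfolding E_def by (rule nn_integral_cong) (rule nn_integral_cmult[OF mP, symmetric])
  also have "\<dots> \<le> (\<integral>\<^sup>+ s. (\<integral>\<^sup>+ t. (\<integral>\<^sup>+ \<omega>. I1 \<omega> s * I2 \<omega> t \<partial>M) \<partial>V) \<partial>V)"
    by (intro nn_integral_mono PQ)
  also have "\<dots> = (\<integral>\<^sup>+ s. (\<integral>\<^sup>+ \<omega>. (\<integral>\<^sup>+ t. I1 \<omega> s * I2 \<omega> t \<partial>V) \<partial>M) \<partial>V)"
    by (rule nn_integral_cong) (rule MV.Fubini'[OF mI12])
  also have "\<dots> = (\<integral>\<^sup>+ \<omega>. (\<integral>\<^sup>+ s. (\<integral>\<^sup>+ t. I1 \<omega> s * I2 \<omega> t \<partial>V) \<partial>V) \<partial>M)"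
    by (rule MV.Fubini'[OF mI123])
  finally have EE: "E * E \<le> ennreal (\<integral>\<omega>. g (X1 \<omega>) * g (X2 \<omega>) \<partial>M)" using cE by simp
  have a0: "0 \<le> (\<integral>\<omega>. g (X1 \<omega>) \<partial>M)" by (rule Bochner_Integration.integral_nonneg) (use g01 in auto)
  have c0: "0 \<le> (\<integral>\<omega>. g (X1 \<omega>) * g (X2 \<omega>) \<partial>M)" by (rule Bochner_Integration.integral_nonneg) (use g01 in auto)
  have "ennreal ((\<integral>\<omega>. g (X1 \<omega>) \<partial>M)\<^sup>2) = E * E"
    using aE a0 by (metis power2_eq_square ennreal_mult)
  hence "ennreal ((\<integral>\<omega>. g (X1 \<omega>) \<partial>M)\<^sup>2) \<le> ennreal (\<integral>\<omega>. g (X1 \<omega>) * g (X2 \<omega>) \<partial>M)"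
    using EE by simp
  hence step2: "(\<integral>\<omega>. g (X1 \<omega>) \<partial>M)\<^sup>2 \<le> (\<integral>\<omega>. g (X1 \<omega>) * g (X2 \<omega>) \<partial>M)"
    using c0 by (simp add: ennreal_le_iff)
  show ?thesis using step1 step2 a_eq b_eq Gg[of 0] by simp
qed

end
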